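(* Let $F_t$, $t\in[0,1]$, be a one-parameter family on a complete metric space $(\mathbb X,d)$ satisfying (H1), (H2) and (H3). Then the lower transition attractor $A_\bullet$ exists, and: (i) $A_\bullet=\bigcap\{A\subseteq\mathbb X: F_1(A)=A \text{ and } Q\subseteq A\}$; (ii) $A_\bullet=\overline{\bigcup_{n\ge 0}F_1^{(n)}(Q)}$; (iii) $A_\bullet=\overline{\bigcup_{n\ge0}F_1^{(n)}(Q')}$, where $Q'=\{q_i:i\in J\}$ for any nonempty $J\subseteq\{1,\dots,N\}$ with $\{i:\mathrm{Lip}(f_{(i,1)},d)=1\}\subseteq J$; (iv) for any such $Q'$, $A_\bullet$ is the semiattractor of the IFS $F_1^\flat:=F_1\cup\{\check q: q\in Q'\}$, where $\check q:\mathbb X\to\mathbb X$ is the constant map $\check q(x)=q$.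
   Context: Let $(\mathbb X,d)$ be a complete metric space. A one-parameter family is $F_t=\{f_{(1,t)},\dots,f_{(N,t)}\}$, $t\in[0,1]$, $N\ge2$, of continuous self-maps of $\mathbb X$. $\mathrm{Lip}(f,d)=\sup_{x\ne y}d(f(x),f(y))/d(x,y)$ and $\mathrm{Lip}(F_t,d)=\max_i\mathrm{Lip}(f_{(i,t)},d)$. Conditions: (H1) for every $x\in\mathbb X$ and every $i$, the map $t\mapsto f_{(i,t)}(x)$ is continuous on $[0,1]$; (H2) $\mathrm{Lip}(F_t,d)<1$ for all $t\in[0,1)$; (H3) for each $i$ the limit $q_i=\lim_{t\to1^-}q_{i,t}$ exists, where $q_{i,t}$ is the unique fixed point of $f_{(i,t)}$ for $t\in[0,1)$; $Q=\{q_1,\dots,q_N\}$. For an IFS $F$ (a family of continuous self-maps) and $S\subseteq\mathbb X$, the Hutchinson operator is $F(S)=\overline{\bigcup_{f\in F}f(S)}$, $F^{(n)}$ its $n$-fold iterate, $F^{(0)}=\mathrm{id}$. The lower transition attractor of $F_t$ is the smallest (w.r.t. inclusion) set $A_\bullet\subseteq\mathbb X$ with $F_1(A_\bullet)=A_\bullet$ and $Q\subseteq A_\bullet$. For sets $S_n\subseteq\mathbb X$, $Li(S_n)=\{y\in\mathbb X:\exists x_n\in S_n,\ x_n\to y\}$ (lower Kuratowski limit). The semiattractor of an IFS $F$ on $\mathbb X$ is $A_*=\bigcap_{x\in\mathbb X}Li(F^{(n)}(\{x\}))$, provided this intersection is nonempty. *)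

theory Defs
  imports "HOL-Analysis.Analysis"
begin

definition Lip :: "('a::metric_space \<Rightarrow> 'a) \<Rightarrow> ereal" where
  "Lip f = (SUP p \<in> {(x, y). x \<noteq> y}. ereal (dist (f (fst p)) (f (snd p)) / dist (fst p) (snd p)))"

definition hutch :: "('a::topological_space \<Rightarrow> 'a) set \<Rightarrow> 'a set \<Rightarrow> 'a set" where
  "hutch F S = closure (\<Union>g\<in>F. g ` S)"

definition Li :: "(nat \<Rightarrow> 'a::topological_space set) \<Rightarrow> 'a set" where
  "Li S = {y. \<exists>xs. (\<forall>n. xs n \<in> S n) \<and> xs \<longlonglongrightarrow> y}"

definition is_semiattractor :: "('a::topological_space \<Rightarrow> 'a) set \<Rightarrow> 'a set \<Rightarrow> bool" where
  "is_semiattractor F A \<longleftrightarrow>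
     A = (\<Inter>x. Li (\<lambda>n. (hutch F ^^ n) {x})) \<and> A \<noteq> {}"

text \<open>A is the lower transition attractor of the family with endpoint IFS F1 and fixed-point
limit set Q: the smallest set (w.r.t. inclusion) with F1(A) = A and Q contained in A.\<close>
definition is_lower_transition_attractor ::
    "('a::topological_space \<Rightarrow> 'a) set \<Rightarrow> 'a set \<Rightarrow> 'a set \<Rightarrow> bool" where
  "is_lower_transition_attractor F1 Q A \<longleftrightarrow>
     hutch F1 A = A \<and> Q \<subseteq> A \<and> (\<forall>B. hutch F1 B = B \<and> Q \<subseteq> B \<longrightarrow> A \<subseteq> B)"

end

theory Submission
  imports Defs
begin

lemma Lip_leD:
  assumes "Lip g \<le> ereal k" "0 \<le> k"
  shows "dist (g x) (g y) \<le> k * dist x y"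
proof (cases "x = y")
  case True then show ?thesis by simp
next
  case False
  have "ereal (dist (g x) (g y) / dist x y) \<le> Lip g"
    unfolding Lip_def by (rule SUP_upper2[of "(x,y)"]) (use False in auto)
  then have "ereal (dist (g x) (g y) / dist x y) \<le> ereal k" using assms(1) by (rule order_trans)
  then have "dist (g x) (g y) / dist x y \<le> k" by simp
  with False show ?thesis by (simp add: pos_divide_le_eq)
qed

lemma Lip_leI:
  assumes "\<And>x y. dist (g x) (g y) \<le> k * dist x y"
  shows "Lip g \<le> ereal k"
  unfolding Lip_def
proof (rule SUP_least)
  fix p :: "'a \<times> 'a" assume "p \<in> {(x, y). x \<noteq> y}"
  then have "dist (fst p) (snd p) > 0" by auto
  with assms[of "fst p" "snd p"] show "ereal (dist (g (fst p)) (g (snd p)) / dist (fst p) (snd p)) \<le> ereal k"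
    by (simp add: pos_divide_le_eq)
qed

lemma Lip_lt1:
  assumes "Lip g < 1"
  obtains k where "0 \<le> k" "k < 1" "Lip g \<le> ereal k"
proof (cases "Lip g")
  case (real r)
  then show ?thesis using assms that[of "max 0 r"] by auto
next
  case PInf then show ?thesis using assms by simp
next
  case MInf then show ?thesis using that[of 0] by simp
qed

lemma hutch_mono:
  assumes "S \<subseteq> T" shows "hutch F S \<subseteq> hutch F T"
  unfolding hutch_def by (intro closure_mono UN_mono order_refl image_mono assms)

lemma hutch_sub:
  assumes "g \<in> F" shows "g ` S \<subseteq> hutch F S"
  unfolding hutch_def by (rule order_trans[OF UN_upper[OF assms] closure_subset])

lemma hutch_const:
  assumes "(\<lambda>x. p) \<in> F" "s \<in> S"
  shows "p \<in> hutch F S"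
proof -
  have "p \<in> (\<lambda>x. p) ` S" using assms(2) by (rule rev_image_eqI) simp
  then show ?thesis using hutch_sub[OF assms(1), of S] by (rule subsetD[rotated])
qed

lemma hutch_closed: "closed (hutch F S)"
  unfolding hutch_def by simp

lemma orbit_min:
  assumes B1: "hutch F B = B" and B2: "P \<subseteq> B"
  shows "closure (\<Union>n. (hutch F ^^ n) P) \<subseteq> B"
proof -
  have hB: "(hutch F ^^ n) P \<subseteq> B" for n
  proof (induction n)
    case 0 show ?case using B2 by simp
  next
    case (Suc n)
    have "(hutch F ^^ Suc n) P = hutch F ((hutch F ^^ n) P)" by simp
    also have "\<dots> \<subseteq> hutch F B" by (rule hutch_mono[OF Suc.IH])
    also have "\<dots> = B" by (rule B1)
    finally show ?case .
  qed
  have cB: "closed B" using hutch_closed[of F B] unfolding B1 .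
  have uB: "(\<Union>n. (hutch F ^^ n) P) \<subseteq> B" by (rule UN_least, rule hB)
  show ?thesis by (rule closure_minimal[OF uB cB])
qed

lemma orbit_sub: "P \<subseteq> closure (\<Union>n. (hutch F ^^ n) P)"
proof -
  have "(hutch F ^^ 0) P \<subseteq> (\<Union>n. (hutch F ^^ n) P)" by (rule UN_upper) simp
  then have "P \<subseteq> (\<Union>n. (hutch F ^^ n) P)" by simp
  then show ?thesis using closure_subset by (rule order_trans)
qed

lemma orbit_inv:
  fixes F :: "('a::metric_space \<Rightarrow> 'a) set"
  assumes contF: "\<And>g. g \<in> F \<Longrightarrow> continuous_on UNIV g"
    and P: "P \<subseteq> hutch F P"
  shows "hutch F (closure (\<Union>n. (hutch F ^^ n) P)) = closure (\<Union>n. (hutch F ^^ n) P)"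
proof -
  define C where "C = closure (\<Union>n. (hutch F ^^ n) P)"
  have PC: "P \<subseteq> C" unfolding C_def by (rule orbit_sub)
  have "hutch F C \<subseteq> C"
  proof -
    have "g ` C \<subseteq> C" if g: "g \<in> F" for g
      unfolding C_def
    proof (rule image_closure_subset)
      show "continuous_on (closure (\<Union>n. (hutch F ^^ n) P)) g"
        by (rule continuous_on_subset[OF contF[OF g]]) simp
      show "closed (closure (\<Union>n. (hutch F ^^ n) P))" by simp
      have gs: "g ` ((hutch F ^^ n) P) \<subseteq> (hutch F ^^ Suc n) P" for n
        using hutch_sub[OF g, of "(hutch F ^^ n) P"] by simp
      have "g ` (\<Union>n. (hutch F ^^ n) P) \<subseteq> (\<Union>n. (hutch F ^^ n) P)"
        unfolding image_UN
      proof (rule UN_least)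
        fix n show "g ` (hutch F ^^ n) P \<subseteq> (\<Union>n. (hutch F ^^ n) P)"
          using gs[of n] UN_upper[of "Suc n" UNIV "\<lambda>n. (hutch F ^^ n) P"] by simp
      qed
      then show "g ` (\<Union>n. (hutch F ^^ n) P) \<subseteq> closure (\<Union>n. (hutch F ^^ n) P)"
        using closure_subset by (rule order_trans)
    qed
    then have "(\<Union>g\<in>F. g ` C) \<subseteq> C" by (rule UN_least)
    then show ?thesis unfolding hutch_def[of F C] by (rule closure_minimal) (simp add: C_def)
  qed
  moreover have "C \<subseteq> hutch F C"
  proof -
    have hn: "(hutch F ^^ n) P \<subseteq> hutch F C" for n
    proof (cases n)
      case 0
      have "P \<subseteq> hutch F C" using P hutch_mono[OF PC, of F] by (rule order_trans)
      then show ?thesis using 0 by simp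
    next
      case (Suc m)
      have mC: "(hutch F ^^ m) P \<subseteq> C" unfolding C_def by (rule order_trans[OF UN_upper closure_subset]) simp
      show ?thesis using Suc hutch_mono[OF mC, of F] by simp
    qed
    have u: "(\<Union>n. (hutch F ^^ n) P) \<subseteq> hutch F C" by (rule UN_least, rule hn)
    have "closure (\<Union>n. (hutch F ^^ n) P) \<subseteq> hutch F C" by (rule closure_minimal[OF u hutch_closed])
    then show ?thesis unfolding C_def .
  qed
  ultimately have "hutch F C = C" by (rule antisym)
  then show ?thesis unfolding C_def .
qed

lemma Li_closed_subset:
  assumes "closed A" "\<And>n. S n \<subseteq> A"
  shows "Li S \<subseteq> A"
proof
  fix y assume "y \<in> Li S"
  then obtain xs where xsS: "\<And>n. xs n \<in> S n" and lim: "xs \<longlonglongrightarrow> y" unfolding Li_def by blast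
  have xsA: "xs n \<in> A" for n using xsS[of n] assms(2)[of n] by (rule subsetD[rotated])
  show "y \<in> A" by (rule closed_sequentially[OF assms(1) xsA lim])
qed

lemma Li_increasing:
  fixes S :: "nat \<Rightarrow> 'a::metric_space set" and T :: "nat \<Rightarrow> 'a set"
  assumes ne: "\<And>n. S n \<noteq> {}"
    and sub: "\<And>k n. k < n \<Longrightarrow> T k \<subseteq> S n"
    and y: "y \<in> closure (\<Union>k. T k)"
  shows "y \<in> Li S"
proof -
  have ex: "\<exists>z. z \<in> S n \<and> dist y z < infdist y (S n) + inverse (real (Suc n))" for n
  proof -
    have "Inf ((\<lambda>a. dist y a) ` S n) < infdist y (S n) + inverse (real (Suc n))"
      using infdist_notempty[OF ne[of n], of y] by simp
    from cInf_lessD[OF _ this] ne[of n] show ?thesis by auto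
  qed
  define xs where "xs n = (SOME z. z \<in> S n \<and> dist y z < infdist y (S n) + inverse (real (Suc n)))" for n
  have xs: "xs n \<in> S n" "dist y (xs n) < infdist y (S n) + inverse (real (Suc n))" for n
    using someI_ex[OF ex[of n]] unfolding xs_def by auto
  have "xs \<longlonglongrightarrow> y"
  proof (rule metric_LIMSEQ_I)
    fix r :: real assume r: "r > 0"
    obtain z where z: "z \<in> (\<Union>k. T k)" "dist z y < r/2"
    proof -
      have h: "\<forall>e>0. \<exists>z\<in>(\<Union>k. T k). dist z y < e" using y unfolding closure_approachable .
      have "\<exists>z\<in>(\<Union>k. T k). dist z y < r/2" using h[rule_format, OF half_gt_zero[OF r]] .
      then show ?thesis using that by blast
    qed
    then obtain k where zk: "z \<in> T k" by auto
    obtain m where m: "inverse (real (Suc m)) < r/2" using reals_Archimedean[of "r/2"] r by auto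
    show "\<exists>no. \<forall>n\<ge>no. dist (xs n) y < r"
    proof (intro exI allI impI)
      fix n assume n: "max (Suc k) m \<le> n"
      then have "z \<in> S n" using sub[of k n] zk by auto
      then have "infdist y (S n) \<le> dist y z" by (rule infdist_le)
      moreover have "inverse (real (Suc n)) \<le> inverse (real (Suc m))"
        using n by (intro le_imp_inverse_le) auto
      moreover have "dist (xs n) y = dist y (xs n)" by (rule dist_commute)
      moreover have "dist y z = dist z y" by (rule dist_commute)
      ultimately show "dist (xs n) y < r" using xs(2)[of n] z(2) m
        by linarith
    qed
  qed
  then show ?thesis unfolding Li_def using xs(1) by blast
qed

theorem mainTheorem3:
  fixes f :: "nat \<Rightarrow> real \<Rightarrow> 'a::complete_space \<Rightarrow> 'a"
    and N :: nat and q :: "nat \<Rightarrow> 'a"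
  assumes N2: "N \<ge> 2"
    and cont: "\<forall>i\<in>{1..N}. \<forall>t\<in>{0..1}. continuous_on UNIV (f i t)"
    and H1: "\<forall>i\<in>{1..N}. \<forall>x. continuous_on {0..1} (\<lambda>t. f i t x)"
    and H2: "\<forall>t\<in>{0..<1}. \<forall>i\<in>{1..N}. Lip (f i t) < 1"
    and H3: "\<forall>i\<in>{1..N}. ((\<lambda>t. THE x. f i t x = x) \<longlongrightarrow> q i) (at_left 1)"
  shows "\<exists>A. is_lower_transition_attractor ((\<lambda>i. f i 1) ` {1..N}) (q ` {1..N}) A
    \<and> A = \<Inter>{B. hutch ((\<lambda>i. f i 1) ` {1..N}) B = B \<and> q ` {1..N} \<subseteq> B}
    \<and> A = closure (\<Union>n. (hutch ((\<lambda>i. f i 1) ` {1..N}) ^^ n) (q ` {1..N}))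
    \<and> (\<forall>J. J \<noteq> {} \<and> J \<subseteq> {1..N} \<and> {i\<in>{1..N}. Lip (f i 1) = 1} \<subseteq> J \<longrightarrow>
          A = closure (\<Union>n. (hutch ((\<lambda>i. f i 1) ` {1..N}) ^^ n) (q ` J))
        \<and> is_semiattractor ((\<lambda>i. f i 1) ` {1..N} \<union> (\<lambda>p. \<lambda>x. p) ` (q ` J)) A)"
proof -
  define F where "F = (\<lambda>i. f i 1) ` {1..N}"
  define G where "G = hutch F"
  have contF: "\<And>g. g \<in> F \<Longrightarrow> continuous_on UNIV g" using cont unfolding F_def by auto
  have ne: "dist (f i t x) (f i t y) \<le> dist x y" if "i \<in> {1..N}" "t \<in> {0..<1}" for i t x y
  proof -
    have "Lip (f i t) < 1" using H2 that by auto
    then obtain k where k: "0 \<le> k" "k < 1" "Lip (f i t) \<le> ereal k" using Lip_lt1 by blast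
    have "dist (f i t x) (f i t y) \<le> k * dist x y" by (rule Lip_leD[OF k(3) k(1)])
    also have "\<dots> \<le> dist x y" using k by (simp add: mult_left_le_one_le)
    finally show ?thesis .
  qed
  have evt: "eventually (\<lambda>t. t \<in> {0..<1}) (at_left (1::real))"
    using eventually_at_left_real[of 0 "1::real"] by (rule eventually_mono) auto
  have lim1: "((\<lambda>t. f i t x) \<longlongrightarrow> f i 1 x) (at_left 1)" if "i \<in> {1..N}" for i x
    using continuous_on_Icc_at_leftD[OF H1[rule_format, OF that, of x]] by simp
  have Lip1: "Lip (f i 1) \<le> 1" if i: "i \<in> {1..N}" for i
  proof -
    have "dist (f i 1 x) (f i 1 y) \<le> 1 * dist x y" for x y
    proof -
      have l: "((\<lambda>t. dist (f i t x) (f i t y)) \<longlongrightarrow> dist (f i 1 x) (f i 1 y)) (at_left 1)"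
        by (intro tendsto_dist lim1 i)
      have e: "eventually (\<lambda>t. dist (f i t x) (f i t y) \<le> dist x y) (at_left 1)"
        using evt by (rule eventually_mono) (use ne i in auto)
      have "dist (f i 1 x) (f i 1 y) \<le> dist x y"
        by (rule tendsto_upperbound[OF l e]) simp
      then show ?thesis by simp
    qed
    then show ?thesis using Lip_leI[of "f i 1" 1] by (simp add: one_ereal_def)
  qed
  have fix1: "f i 1 (q i) = q i" if i: "i \<in> {1..N}" for i
  proof -
    define p where "p t = (THE x. f i t x = x)" for t
    have pfix: "f i t (p t) = p t" if t: "t \<in> {0..<1}" for t :: real
    proof -
      have "Lip (f i t) < 1" using H2 t i by auto
      then obtain k where k: "0 \<le> k" "k < 1" "Lip (f i t) \<le> ereal k" using Lip_lt1 by blast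
      have "\<exists>!x. f i t x = x"
        by (rule banach_fix_type[OF k(1,2)]) (use Lip_leD[OF k(3) k(1)] in auto)
      then show ?thesis unfolding p_def by (rule theI')
    qed
    have lp: "(p \<longlongrightarrow> q i) (at_left 1)" using H3 i unfolding p_def by auto
    have "((\<lambda>t. dist (p t) (f i 1 (q i))) \<longlongrightarrow> 0) (at_left 1)"
    proof (rule tendsto_sandwich)
      show "eventually (\<lambda>t. 0 \<le> dist (p t) (f i 1 (q i))) (at_left 1)" by simp
      show "eventually (\<lambda>t. dist (p t) (f i 1 (q i)) \<le> dist (p t) (q i) + dist (f i t (q i)) (f i 1 (q i))) (at_left 1)"
        using evt
      proof (rule eventually_mono)
        fix t :: real assume t: "t \<in> {0..<1}"
        have "dist (p t) (f i 1 (q i)) = dist (f i t (p t)) (f i 1 (q i))" using pfix[OF t] by simp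
        also have "\<dots> \<le> dist (f i t (p t)) (f i t (q i)) + dist (f i t (q i)) (f i 1 (q i))"
          by (rule dist_triangle)
        also have "\<dots> \<le> dist (p t) (q i) + dist (f i t (q i)) (f i 1 (q i))"
          using ne[OF i t] by simp
        finally show "dist (p t) (f i 1 (q i)) \<le> dist (p t) (q i) + dist (f i t (q i)) (f i 1 (q i))" .
      qed
      have "((\<lambda>t. dist (p t) (q i) + dist (f i t (q i)) (f i 1 (q i))) \<longlongrightarrow> dist (q i) (q i) + dist (f i 1 (q i)) (f i 1 (q i))) (at_left 1)"
        by (intro tendsto_add tendsto_dist lp lim1 i tendsto_const)
      then show "((\<lambda>t. dist (p t) (q i) + dist (f i t (q i)) (f i 1 (q i))) \<longlongrightarrow> 0) (at_left 1)" by simp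
    qed (rule tendsto_const)
    then have "(p \<longlongrightarrow> f i 1 (q i)) (at_left 1)" by (rule tendsto_dist_iff[THEN iffD2])
    from tendsto_unique[OF _ this lp] show ?thesis by simp
  qed
  have Pfix: "q ` J \<subseteq> G (q ` J)" if J: "J \<subseteq> {1..N}" for J
  proof
    fix y assume "y \<in> q ` J"
    then obtain j where j: "j \<in> J" "y = q j" by auto
    have "f j 1 \<in> F" using j J unfolding F_def by auto
    moreover have "y = f j 1 (q j)" using fix1[of j] j J by auto
    moreover have "q j \<in> q ` J" using j(1) by (rule imageI)
    ultimately have "y \<in> f j 1 ` q ` J" by simp
    then have "y \<in> (\<Union>g\<in>F. g ` q ` J)" using \<open>f j 1 \<in> F\<close> by (rule UN_I[rotated])
    then show "y \<in> G (q ` J)" unfolding G_def hutch_def by (rule subsetD[OF closure_subset])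
  qed
  define A where "A = closure (\<Union>n. (G ^^ n) (q ` {1..N}))"
  have oc: "G A = A" "q ` {1..N} \<subseteq> A" "\<And>B. G B = B \<Longrightarrow> q ` {1..N} \<subseteq> B \<Longrightarrow> A \<subseteq> B"
    unfolding A_def G_def
      apply (rule orbit_inv, erule contF, rule Pfix[OF order_refl, unfolded G_def])
     apply (rule orbit_sub)
    apply (rule orbit_min; assumption)
    done
  have GA: "G A = A" by (rule oc(1))
  have Aclosed: "closed A" unfolding A_def by simp
  have lta: "is_lower_transition_attractor F (q ` {1..N}) A"
    unfolding is_lower_transition_attractor_def G_def[symmetric]
  proof (intro conjI allI impI)
    show "G A = A" by (rule GA)
    show "q ` {1..N} \<subseteq> A" by (rule oc(2))
    fix B assume "G B = B \<and> q ` {1..N} \<subseteq> B"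
    then show "A \<subseteq> B" using oc(3) by simp
  qed
  have inter: "A = \<Inter>{B. G B = B \<and> q ` {1..N} \<subseteq> B}"
  proof (rule antisym)
    show "A \<subseteq> \<Inter>{B. G B = B \<and> q ` {1..N} \<subseteq> B}"
      by (rule Inter_greatest) (use oc(3) in simp)
    show "\<Inter>{B. G B = B \<and> q ` {1..N} \<subseteq> B} \<subseteq> A"
      by (rule Inter_lower) (use GA oc(2) in simp)
  qed
  have partJ: "A = closure (\<Union>n. (G ^^ n) (q ` J))
        \<and> is_semiattractor (F \<union> (\<lambda>p. \<lambda>x. p) ` (q ` J)) A"
    if J: "J \<noteq> {}" "J \<subseteq> {1..N}" "{i\<in>{1..N}. Lip (f i 1) = 1} \<subseteq> J" for J
  proof -
    define C where "C = closure (\<Union>n. (G ^^ n) (q ` J))"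
    have ocJ: "G C = C" "q ` J \<subseteq> C" "\<And>B. G B = B \<Longrightarrow> q ` J \<subseteq> B \<Longrightarrow> C \<subseteq> B"
      unfolding C_def G_def
      apply (rule orbit_inv, erule contF, rule Pfix[OF J(2), unfolded G_def])
     apply (rule orbit_sub)
    apply (rule orbit_min; assumption)
    done
    have GC: "G C = C" by (rule ocJ(1))
    have "q ` J \<subseteq> A" using image_mono[OF J(2), of q] oc(2) by (rule order_trans)
    then have CA: "C \<subseteq> A" by (rule ocJ(3)[OF GA])
    obtain j0 where j0: "j0 \<in> J" using J(1) by auto
    have Cclosed: "closed C" unfolding C_def by simp
    have QC: "q i \<in> C" if i: "i \<in> {1..N}" for i
    proof (cases "i \<in> J")
      case True then show ?thesis using ocJ(2) by auto
    next
      case False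
      then have "Lip (f i 1) < 1" using Lip1[OF i] J(3) i by auto
      then obtain k where k: "0 \<le> k" "k < 1" "Lip (f i 1) \<le> ereal k" using Lip_lt1 by blast
      have inv: "f i 1 ` C \<subseteq> C"
      proof -
        have "f i 1 \<in> F" using i unfolding F_def by blast
        then have "f i 1 ` C \<subseteq> G C" unfolding G_def by (rule hutch_sub)
        then show ?thesis using GC by simp
      qed
      define x0 where "x0 = q j0"
      have x0: "x0 \<in> C" using ocJ(2) j0 unfolding x0_def by auto
      have itC: "(f i 1 ^^ n) x0 \<in> C" for n
        by (induction n) (use x0 inv in auto)
      have bnd: "dist ((f i 1 ^^ n) x0) (q i) \<le> k ^ n * dist x0 (q i)" for n
      proof (induction n)
        case (Suc n)
        have "dist ((f i 1 ^^ Suc n) x0) (q i) = dist (f i 1 ((f i 1 ^^ n) x0)) (f i 1 (q i))"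
          using fix1[OF i] by simp
        also have "\<dots> \<le> k * dist ((f i 1 ^^ n) x0) (q i)" by (rule Lip_leD[OF k(3) k(1)])
        also have "\<dots> \<le> k * (k ^ n * dist x0 (q i))" using Suc k(1) by (rule mult_left_mono)
        finally show ?case by simp
      qed simp
      have "(\<lambda>n. k ^ n * dist x0 (q i)) \<longlonglongrightarrow> 0"
        by (intro tendsto_mult_left_zero LIMSEQ_power_zero) (use k in auto)
      then have "(\<lambda>n. dist ((f i 1 ^^ n) x0) (q i)) \<longlonglongrightarrow> 0"
      proof (rule Lim_null_comparison[rotated])
        show "\<forall>\<^sub>F n in sequentially. norm (dist ((f i 1 ^^ n) x0) (q i)) \<le> k ^ n * dist x0 (q i)"
          by (rule always_eventually) (use bnd in simp)
      qed
      then have "(\<lambda>n. (f i 1 ^^ n) x0) \<longlonglongrightarrow> q i" by (rule tendsto_dist_iff[THEN iffD2])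
      then show ?thesis by (rule closed_sequentially[OF Cclosed itC])
    qed
    have "q ` {1..N} \<subseteq> C" by (rule image_subsetI) (rule QC)
    then have AC: "A \<subseteq> C" by (rule oc(3)[OF GC])
    have AeqC: "A = C" using AC CA by (rule antisym)
    define H where "H = F \<union> (\<lambda>p. \<lambda>x. p) ` (q ` J)"
    define T where "T k = (G ^^ k) (q ` J)" for k
    have Tmono: "T k \<subseteq> T (Suc k)" for k
    proof (induction k)
      case 0 then show ?case using Pfix[OF J(2)] unfolding T_def by simp
    next
      case (Suc k) then show ?case unfolding T_def G_def using hutch_mono[OF Suc.IH[unfolded T_def G_def], of F] by simp
    qed
    have Tmono': "k \<le> n \<Longrightarrow> T k \<subseteq> T n" for k n
      by (rule lift_Suc_mono_le[of T, OF Tmono])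
    have GH: "G S \<subseteq> hutch H S" for S
      unfolding G_def hutch_def H_def by (rule closure_mono) blast
    have HS: "T m \<subseteq> (hutch H ^^ Suc m) {x}" for m x
    proof (induction m)
      case 0
      have "q j \<in> hutch H {x}" if "j \<in> J" for j
        by (rule hutch_const[of "q j"]) (use that in \<open>auto simp: H_def\<close>)
      then show ?case unfolding T_def by auto
    next
      case (Suc m)
      have "T (Suc m) = G (T m)" unfolding T_def by simp
      also have "\<dots> \<subseteq> G ((hutch H ^^ Suc m) {x})" using Suc unfolding G_def by (rule hutch_mono)
      also have "\<dots> \<subseteq> hutch H ((hutch H ^^ Suc m) {x})" by (rule GH)
      finally show ?case by simp
    qed
    have AsubLi: "A \<subseteq> Li (\<lambda>n. (hutch H ^^ n) {x})" for x
    proof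
      fix y assume "y \<in> A"
      then have y: "y \<in> closure (\<Union>k. T k)" using AeqC unfolding C_def T_def by simp
      show "y \<in> Li (\<lambda>n. (hutch H ^^ n) {x})"
      proof (rule Li_increasing[OF _ _ y])
        fix n show "(hutch H ^^ n) {x} \<noteq> {}"
        proof (induction n)
          case (Suc n)
          then obtain z where "z \<in> (hutch H ^^ n) {x}" by auto
          then have "q j0 \<in> hutch H ((hutch H ^^ n) {x})"
            by (intro hutch_const[of "q j0"]) (use j0 in \<open>auto simp: H_def\<close>)
          then show ?case by auto
        qed simp
      next
        fix k n :: nat assume "k < n"
        then obtain m where m: "n = Suc m" "k \<le> m" by (cases n) auto
        show "T k \<subseteq> (hutch H ^^ n) {x}" using order_trans[OF Tmono'[OF m(2)] HS[of m x]] m(1) by simp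
      qed
    qed
    have Hinv: "hutch H S \<subseteq> A" if SA: "S \<subseteq> A" for S
    proof -
      have "g ` S \<subseteq> A" if g: "g \<in> H" for g
      proof (cases "g \<in> F")
        case True
        have "g ` S \<subseteq> G A" unfolding G_def using hutch_sub[OF True, of S] hutch_mono[OF SA, of F] by (rule order_trans)
        then show ?thesis using GA by simp
      next
        case False
        then obtain j where "j \<in> J" "g = (\<lambda>x. q j)" using g unfolding H_def by auto
        then show ?thesis using oc(2) J(2) by auto
      qed
      then have "(\<Union>g\<in>H. g ` S) \<subseteq> A" by (rule UN_least)
      then show ?thesis unfolding hutch_def using Aclosed by (rule closure_minimal)
    qed
    have q0A: "q j0 \<in> A" using oc(2) j0 J(2) by auto
    have "(hutch H ^^ n) {q j0} \<subseteq> A" for n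
      by (induction n) (use q0A Hinv in auto)
    then have "Li (\<lambda>n. (hutch H ^^ n) {q j0}) \<subseteq> A" by (rule Li_closed_subset[OF Aclosed])
    then have "(\<Inter>x. Li (\<lambda>n. (hutch H ^^ n) {x})) \<subseteq> A" using INT_lower[of "q j0" UNIV] by (rule order_trans[rotated]) simp
    moreover have "A \<subseteq> (\<Inter>x. Li (\<lambda>n. (hutch H ^^ n) {x}))" by (rule INT_greatest) (rule AsubLi)
    ultimately have "A = (\<Inter>x. Li (\<lambda>n. (hutch H ^^ n) {x}))" by (rule antisym[rotated])
    moreover have "A \<noteq> {}" using q0A by auto
    moreover have "A = closure (\<Union>n. (G ^^ n) (q ` J))" using AeqC unfolding C_def .
    ultimately show ?thesis unfolding is_semiattractor_def H_def[symmetric]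
      by (intro conjI) assumption+
  qed
  show ?thesis
    unfolding F_def[symmetric] G_def[symmetric]
  proof (rule exI[of _ A], intro conjI allI impI)
    show "is_lower_transition_attractor F (q ` {1..N}) A" by (rule lta)
    show "A = \<Inter>{B. G B = B \<and> q ` {1..N} \<subseteq> B}" by (rule inter)
    show "A = closure (\<Union>n. (G ^^ n) (q ` {1..N}))" by (rule A_def)
  next
    fix J assume J: "J \<noteq> {} \<and> J \<subseteq> {1..N} \<and> {i \<in> {1..N}. Lip (f i 1) = 1} \<subseteq> J"
    have "A = closure (\<Union>n. (G ^^ n) (q ` J)) \<and> is_semiattractor (F \<union> (\<lambda>p. \<lambda>x. p) ` (q ` J)) A"
      by (rule partJ) (use J in blast)+
    then show "A = closure (\<Union>n. (G ^^ n) (q ` J))" by (rule conjunct1)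
  next
    fix J assume J: "J \<noteq> {} \<and> J \<subseteq> {1..N} \<and> {i \<in> {1..N}. Lip (f i 1) = 1} \<subseteq> J"
    have "A = closure (\<Union>n. (G ^^ n) (q ` J)) \<and> is_semiattractor (F \<union> (\<lambda>p. \<lambda>x. p) ` (q ` J)) A"
      by (rule partJ) (use J in blast)+
    then show "is_semiattractor (F \<union> (\<lambda>p. \<lambda>x. p) ` (q ` J)) A" by (rule conjunct2)
  qed
qed

end
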